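(* Let $x:M\to\mathbb{R}^3$ be a smooth immersed oriented surface with Gauss map $N$ whose mean curvature satisfies $2H=a(x_1^2+x_2^2)+b$ for constants $a,b\in\mathbb{R}$. Then both functions $N_3=\langle N,E_3\rangle$ and $\psi=\langle x\wedge N,E_3\rangle$ satisfy $$\Delta u+\big(|\sigma|^2-2a(h-x_3N_3)\big)u=0\quad\text{on }M.$$
   Context: $E_1,E_2,E_3$ is the standard basis of $\mathbb{R}^3$, $\wedge$ the cross product, $x_i=\langle x,E_i\rangle$. $\Delta$ is the Laplace–Beltrami operator of the induced metric, $\sigma$ the second fundamental form, $h=\langle N,x\rangle$ the support function, and the mean curvature $H$ is defined with respect to $N$ by $\Delta x=2HN$. *)

theory Defs
  imports "HOL-Analysis.Analysis"
begin

text \<open>Local setting: a surface patch x : U \<rightarrow> R^3, U an open subset of R^2 = real \<times> real,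
  coordinates (u,v).  All notions below are the standard coordinate expressions.\<close>

text \<open>Partial derivatives with respect to u (index False) and v (index True).\<close>
definition pd :: "bool \<Rightarrow> (real \<times> real \<Rightarrow> 'a::real_normed_vector) \<Rightarrow> real \<times> real \<Rightarrow> 'a" where
  "pd j f p = frechet_derivative f (at p) (if j then (0, 1) else (1, 0))"

fun ipd :: "bool list \<Rightarrow> (real \<times> real \<Rightarrow> 'a::real_normed_vector) \<Rightarrow> real \<times> real \<Rightarrow> 'a" where
  "ipd [] f = f"
| "ipd (j # js) f = pd j (ipd js f)"

definition smooth_on :: "(real \<times> real) set \<Rightarrow> (real \<times> real \<Rightarrow> 'a::real_normed_vector) \<Rightarrow> bool" where
  "smooth_on U f \<longleftrightarrow> (\<forall>js. ipd js f differentiable_on U)"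

definition E :: "3 \<Rightarrow> real^3" where
  "E i = axis i 1"

definition gmet :: "(real \<times> real \<Rightarrow> real^3) \<Rightarrow> bool \<Rightarrow> bool \<Rightarrow> real \<times> real \<Rightarrow> real" where
  "gmet x i j p = pd i x p \<bullet> pd j x p"

definition gdet :: "(real \<times> real \<Rightarrow> real^3) \<Rightarrow> real \<times> real \<Rightarrow> real" where
  "gdet x p = gmet x False False p * gmet x True True p - gmet x False True p * gmet x True False p"

definition ginv :: "(real \<times> real \<Rightarrow> real^3) \<Rightarrow> bool \<Rightarrow> bool \<Rightarrow> real \<times> real \<Rightarrow> real" where
  "ginv x i j p = (if i = j then gmet x (\<not> i) (\<not> j) p else - gmet x i j p) / gdet x p"

definition lapl :: "(real \<times> real \<Rightarrow> real^3) \<Rightarrow> (real \<times> real \<Rightarrow> real) \<Rightarrow> real \<times> real \<Rightarrow> real" where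
  "lapl x f p = (1 / sqrt (gdet x p)) *
     (\<Sum>i\<in>(UNIV::bool set). pd i (\<lambda>q. sqrt (gdet x q) *
        (\<Sum>j\<in>(UNIV::bool set). ginv x i j q * pd j f q)) p)"

definition lapl_vec :: "(real \<times> real \<Rightarrow> real^3) \<Rightarrow> (real \<times> real \<Rightarrow> real^3) \<Rightarrow> real \<times> real \<Rightarrow> real^3" where
  "lapl_vec x F p = (\<chi> k. lapl x (\<lambda>q. F q $ k) p)"

text \<open>Mean curvature with respect to N, defined by \<Delta>x = 2HN (the normal component of \<Delta>x / 2).\<close>
definition mean_curv :: "(real \<times> real \<Rightarrow> real^3) \<Rightarrow> (real \<times> real \<Rightarrow> real^3) \<Rightarrow> real \<times> real \<Rightarrow> real" where
  "mean_curv x N p = (lapl_vec x x p \<bullet> N p) / 2"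

definition sff :: "(real \<times> real \<Rightarrow> real^3) \<Rightarrow> (real \<times> real \<Rightarrow> real^3) \<Rightarrow> bool \<Rightarrow> bool \<Rightarrow> real \<times> real \<Rightarrow> real" where
  "sff x N i j p = pd i (pd j x) p \<bullet> N p"

definition sff_norm2 :: "(real \<times> real \<Rightarrow> real^3) \<Rightarrow> (real \<times> real \<Rightarrow> real^3) \<Rightarrow> real \<times> real \<Rightarrow> real" where
  "sff_norm2 x N p = (\<Sum>i\<in>UNIV. \<Sum>j\<in>UNIV. \<Sum>k\<in>UNIV. \<Sum>l\<in>UNIV.
      ginv x i k p * ginv x j l p * sff x N i j p * sff x N k l p)"

definition support :: "(real \<times> real \<Rightarrow> real^3) \<Rightarrow> (real \<times> real \<Rightarrow> real^3) \<Rightarrow> real \<times> real \<Rightarrow> real" where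
  "support x N p = N p \<bullet> x p"

definition immersed_patch_with_gauss_map ::
  "(real \<times> real) set \<Rightarrow> (real \<times> real \<Rightarrow> real^3) \<Rightarrow> (real \<times> real \<Rightarrow> real^3) \<Rightarrow> bool" where
  "immersed_patch_with_gauss_map U x N \<longleftrightarrow> open U \<and> smooth_on U x \<and> smooth_on U N \<and>
     (\<forall>p\<in>U. cross3 (pd False x p) (pd True x p) \<noteq> 0 \<and> norm (N p) = 1 \<and>
        N p \<bullet> pd False x p = 0 \<and> N p \<bullet> pd True x p = 0)"

end

theory Submission
  imports Defs
begin


definition dir :: "bool \<Rightarrow> real \<times> real" where "dir j = (if j then (0,1) else (1,0))"

lemma pd_dir: "pd j f p = frechet_derivative f (at p) (dir j)"
  by (simp add: pd_def dir_def)

lemma pdI: "(f has_derivative f') (at p) \<Longrightarrow> f' (dir j) = c \<Longrightarrow> pd j f p = c"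
  unfolding pd_dir using frechet_derivative_at by metis

lemma fdw: "f differentiable at p \<Longrightarrow> (f has_derivative (\<lambda>v. frechet_derivative f (at p) v)) (at p)"
  using frechet_derivative_works by auto

lemma pd_inner:
  assumes "f differentiable at p" "g differentiable at p"
  shows "pd j (\<lambda>q. f q \<bullet> g q) p = pd j f p \<bullet> g p + f p \<bullet> pd j g p"
  by (rule pdI, rule has_derivative_inner[OF fdw[OF assms(1)] fdw[OF assms(2)]]) (simp add: pd_dir)

lemma pd_mult:
  fixes f g :: "real \<times> real \<Rightarrow> real"
  assumes "f differentiable at p" "g differentiable at p"
  shows "pd j (\<lambda>q. f q * g q) p = pd j f p * g p + f p * pd j g p"
  by (rule pdI, rule has_derivative_mult[OF fdw[OF assms(1)] fdw[OF assms(2)]]) (simp add: pd_dir)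

lemma pd_scaleR:
  fixes f :: "real \<times> real \<Rightarrow> real" and g :: "real \<times> real \<Rightarrow> 'a::real_normed_vector"
  assumes "f differentiable at p" "g differentiable at p"
  shows "pd j (\<lambda>q. f q *\<^sub>R g q) p = pd j f p *\<^sub>R g p + f p *\<^sub>R pd j g p"
  by (rule pdI, rule has_derivative_scaleR[OF fdw[OF assms(1)] fdw[OF assms(2)]]) (simp add: pd_dir)

lemma pd_add:
  assumes "f differentiable at p" "g differentiable at p"
  shows "pd j (\<lambda>q. f q + g q) p = pd j f p + pd j g p"
  by (rule pdI, rule has_derivative_add[OF fdw[OF assms(1)] fdw[OF assms(2)]]) (simp add: pd_dir)

lemma pd_diff:
  assumes "f differentiable at p" "g differentiable at p"
  shows "pd j (\<lambda>q. f q - g q) p = pd j f p - pd j g p"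
  by (rule pdI, rule has_derivative_diff[OF fdw[OF assms(1)] fdw[OF assms(2)]]) (simp add: pd_dir)

lemma pd_const: "pd j (\<lambda>q. c) p = 0"
  by (rule pdI, rule has_derivative_const) simp

lemma pd_cmult:
  fixes f :: "real \<times> real \<Rightarrow> real"
  assumes "f differentiable at p"
  shows "pd j (\<lambda>q. c * f q) p = c * pd j f p"
  by (rule pdI, rule has_derivative_mult_right[OF fdw[OF assms(1)]]) (simp add: pd_dir)

lemma pd_sum:
  assumes "finite A" "\<And>i. i \<in> A \<Longrightarrow> f i differentiable at p"
  shows "pd j (\<lambda>q. \<Sum>i\<in>A. f i q) p = (\<Sum>i\<in>A. pd j (f i) p)"
  by (rule pdI, rule has_derivative_sum[OF fdw[OF assms(2)]]) (simp_all add: pd_dir)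

lemma pd_nth:
  fixes f :: "real \<times> real \<Rightarrow> real^'n"
  assumes "f differentiable at p"
  shows "pd j (\<lambda>q. f q $ k) p = pd j f p $ k"
  by (rule pdI, rule bounded_linear.has_derivative[OF bounded_linear_vec_nth fdw[OF assms(1)]]) (simp add: pd_dir)

lemma bb_cross: "bounded_bilinear cross3"
  using bilinear_conv_bounded_bilinear bilinear_cross by blast

lemma pd_cross:
  assumes "f differentiable at p" "g differentiable at p"
  shows "pd j (\<lambda>q. cross3 (f q) (g q)) p = cross3 (pd j f p) (g p) + cross3 (f p) (pd j g p)"
  by (rule pdI, rule bounded_bilinear.FDERIV[OF bb_cross fdw[OF assms(1)] fdw[OF assms(2)]]) (simp add: pd_dir)

lemma pd_sqrt:
  fixes f :: "real \<times> real \<Rightarrow> real"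
  assumes "f differentiable at p" "f p > 0"
  shows "pd j (\<lambda>q. sqrt (f q)) p = pd j f p / (2 * sqrt (f p))"
proof -
  have "((\<lambda>q. sqrt (f q)) has_derivative (\<lambda>v. frechet_derivative f (at p) v * (inverse (sqrt (f p)) / 2))) (at p)"
    by (rule DERIV_compose_FDERIV[OF DERIV_real_sqrt[OF assms(2)] fdw[OF assms(1)]])
  then show ?thesis by (rule pdI) (simp add: pd_dir field_simps)
qed

lemma pd_divide:
  fixes f g :: "real \<times> real \<Rightarrow> real"
  assumes "f differentiable at p" "g differentiable at p" "g p \<noteq> 0"
  shows "pd j (\<lambda>q. f q / g q) p = (pd j f p * g p - f p * pd j g p) / (g p)^2"
  apply (rule pdI, rule has_derivative_divide[OF fdw[OF assms(1)] fdw[OF assms(2)] assms(3)])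
  using assms(3) by (simp add: pd_dir field_simps power2_eq_square)

lemma pd_local:
  assumes "f differentiable at p" "open U" "p \<in> U" "\<And>q. q \<in> U \<Longrightarrow> f q = g q"
  shows "pd j f p = pd j g p"
  unfolding pd_dir using frechet_derivative_transform_within_open[OF assms] by simp

lemma pd_zero_local:
  assumes "open U" "p \<in> U" "\<And>q. q \<in> U \<Longrightarrow> f q = c"
  shows "pd j f p = 0"
proof -
  have "pd j (\<lambda>q. c) p = pd j f p"
    by (rule pd_local[OF _ assms(1,2)]) (use assms(3) in auto)
  then show ?thesis by (simp add: pd_const)
qed




lemma deriv_line_u:
  fixes f :: "real \<times> real \<Rightarrow> real"
  assumes "f differentiable at (a + t, c)"
  shows "((\<lambda>s. f (a + s, c)) has_real_derivative pd False f (a + t, c)) (at t)"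
proof -
  have l: "((\<lambda>s. (a + s, c)) has_derivative (\<lambda>s. (s, 0))) (at t)"
    by (auto intro!: derivative_eq_intros)
  have "((\<lambda>s. f (a + s, c)) has_derivative (\<lambda>s. frechet_derivative f (at (a+t,c)) (s, 0))) (at t)"
    using has_derivative_compose[OF l fdw[OF assms]] by (simp add: comp_def)
  moreover have "frechet_derivative f (at (a+t,c)) (s, 0) = pd False f (a + t, c) * s" for s
  proof -
    have lin: "linear (frechet_derivative f (at (a+t,c)))"
      using fdw[OF assms] has_derivative_linear by blast
    have "(s, 0::real) = s *\<^sub>R (1, 0)" by simp
    then show ?thesis using linear_scale[OF lin, of s "(1,0)"] by (simp add: pd_dir dir_def)
  qed
  ultimately show ?thesis unfolding has_field_derivative_def by simp
qed

lemma deriv_line_v: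
  fixes f :: "real \<times> real \<Rightarrow> real"
  assumes "f differentiable at (c, b + t)"
  shows "((\<lambda>s. f (c, b + s)) has_real_derivative pd True f (c, b + t)) (at t)"
proof -
  have l: "((\<lambda>s. (c, b + s)) has_derivative (\<lambda>s. (0, s))) (at t)"
    by (auto intro!: derivative_eq_intros)
  have "((\<lambda>s. f (c, b + s)) has_derivative (\<lambda>s. frechet_derivative f (at (c,b+t)) (0, s))) (at t)"
    using has_derivative_compose[OF l fdw[OF assms]] by (simp add: comp_def)
  moreover have "frechet_derivative f (at (c,b+t)) (0, s) = pd True f (c, b + t) * s" for s
  proof -
    have lin: "linear (frechet_derivative f (at (c,b+t)))"
      using fdw[OF assms] has_derivative_linear by blast
    have "(0::real, s) = s *\<^sub>R (0, 1)" by simp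
    then show ?thesis using linear_scale[OF lin, of s "(0,1)"] by (simp add: pd_dir dir_def)
  qed
  ultimately show ?thesis unfolding has_field_derivative_def by simp
qed

lemma diff_est:
  fixes g :: "real \<times> real \<Rightarrow> real"
  assumes "g differentiable at p" "e > 0"
  shows "\<exists>d>0. \<forall>w1 w2. norm (w1 - p) < d \<longrightarrow> norm (w2 - p) < d \<longrightarrow>
     \<bar>g w1 - g w2 - frechet_derivative g (at p) (w1 - w2)\<bar> \<le> e * (norm (w1 - p) + norm (w2 - p))"
proof -
  let ?D = "frechet_derivative g (at p)"
  have hd: "(g has_derivative ?D) (at p)" using fdw[OF assms(1)] by simp
  then have lin: "linear ?D" using has_derivative_linear by blast
  from hd[unfolded has_derivative_at_alt] assms(2) obtain d where d: "d > 0"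
    "\<And>y. norm (y - p) < d \<Longrightarrow> norm (g y - g p - ?D (y - p)) \<le> e * norm (y - p)" by blast
  show ?thesis
  proof (intro exI[of _ d] conjI allI impI d(1))
    fix w1 w2 assume w: "norm (w1 - p) < d" "norm (w2 - p) < d"
    have "?D (w1 - w2) = ?D (w1 - p) - ?D (w2 - p)"
      using linear_diff[OF lin, of "w1 - p" "w2 - p"] by simp
    then have "g w1 - g w2 - ?D (w1 - w2) = (g w1 - g p - ?D (w1 - p)) - (g w2 - g p - ?D (w2 - p))"
      by simp
    moreover have "\<bar>g w1 - g p - ?D (w1 - p)\<bar> \<le> e * norm (w1 - p)" using d(2)[OF w(1)] by simp
    moreover have "\<bar>g w2 - g p - ?D (w2 - p)\<bar> \<le> e * norm (w2 - p)" using d(2)[OF w(2)] by simp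
    ultimately show "\<bar>g w1 - g w2 - ?D (w1 - w2)\<bar> \<le> e * (norm (w1 - p) + norm (w2 - p))"
      by (simp add: distrib_left)
  qed
qed

lemma schwarz_real:
  fixes f :: "real \<times> real \<Rightarrow> real"
  assumes U: "open U" "p \<in> U" and df: "\<And>q. q \<in> U \<Longrightarrow> f differentiable at q"
    and du: "pd False f differentiable at p" and dv: "pd True f differentiable at p"
  shows "pd True (pd False f) p = pd False (pd True f) p"
proof (rule ccontr)
  obtain a b where p: "p = (a, b)" by (cases p)
  let ?A = "pd True (pd False f) p" and ?B = "pd False (pd True f) p"
  assume ne: "?A \<noteq> ?B"
  define e where "e = \<bar>?A - ?B\<bar> / 12"
  have e: "e > 0" using ne by (simp add: e_def)
  obtain d1 where d1: "d1 > 0" "\<And>w1 w2. norm (w1 - p) < d1 \<Longrightarrow> norm (w2 - p) < d1 \<Longrightarrow>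
     \<bar>pd False f w1 - pd False f w2 - frechet_derivative (pd False f) (at p) (w1 - w2)\<bar> \<le> e * (norm (w1 - p) + norm (w2 - p))"
    using diff_est[OF du e] by blast
  obtain d2 where d2: "d2 > 0" "\<And>w1 w2. norm (w1 - p) < d2 \<Longrightarrow> norm (w2 - p) < d2 \<Longrightarrow>
     \<bar>pd True f w1 - pd True f w2 - frechet_derivative (pd True f) (at p) (w1 - w2)\<bar> \<le> e * (norm (w1 - p) + norm (w2 - p))"
    using diff_est[OF dv e] by blast
  obtain r where r: "r > 0" "ball p r \<subseteq> U" using U open_contains_ball by blast
  define h where "h = min d1 (min d2 r) / 3"
  have h: "h > 0" "3 * h \<le> d1" "3 * h \<le> d2" "3 * h \<le> r" using d1 d2 r by (auto simp: h_def)
  have inU: "(a + s, b + t) \<in> U" if "0 \<le> s" "s \<le> h" "0 \<le> t" "t \<le> h" for s t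
  proof -
    have "norm ((a + s, b + t) - p) \<le> norm s + norm t"
      using norm_Pair_le[of s t] by (simp add: p)
    also have "\<dots> < r" using that h by simp
    finally show ?thesis using r(2) by (auto simp: dist_norm norm_minus_commute)
  qed
  have nrm: "norm ((a + s, b + t) - p) \<le> s + t" if "0 \<le> s" "0 \<le> t" for s t
    using norm_Pair_le[of s t] that by (simp add: p)
  define \<Delta> where "\<Delta> = f (a+h, b+h) - f (a+h, b) - f (a, b+h) + f (a, b)"
  obtain \<theta> where th: "0 < \<theta>" "\<theta> < h"
    "(\<lambda>s. f (a + s, b + h) - f (a + s, b)) h - (\<lambda>s. f (a + s, b + h) - f (a + s, b)) 0
       = (h - 0) * (pd False f (a + \<theta>, b + h) - pd False f (a + \<theta>, b))"
  proof -
    have "\<exists>z. 0 < z \<and> z < h \<and> (\<lambda>s. f (a + s, b + h) - f (a + s, b)) h - (\<lambda>s. f (a + s, b + h) - f (a + s, b)) 0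
       = (h - 0) * (\<lambda>z. pd False f (a + z, b + h) - pd False f (a + z, b)) z"
    proof (rule MVT2[OF h(1)])
      fix s assume s: "0 \<le> s" "s \<le> h"
      have "f differentiable at (a + s, b + h)" "f differentiable at (a + s, b + 0)"
        using df[OF inU[of s h]] df[OF inU[of s 0]] s h by auto
      then show "((\<lambda>s. f (a + s, b + h) - f (a + s, b)) has_real_derivative
          pd False f (a + s, b + h) - pd False f (a + s, b)) (at s)"
        using DERIV_diff[OF deriv_line_u deriv_line_u] by simp
    qed
    then show ?thesis using that by auto
  qed
  have E1: "\<bar>\<Delta> - h * h * ?A\<bar> \<le> 3 * e * h * h"
  proof -
    let ?w1 = "(a + \<theta>, b + h)" and ?w2 = "(a + \<theta>, b)"
    have n1: "norm (?w1 - p) \<le> 2 * h" using nrm[of \<theta> h] th h by simp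
    have n2: "norm (?w2 - p) \<le> h" using nrm[of \<theta> 0] th h by simp
    have lin: "linear (frechet_derivative (pd False f) (at p))"
      using fdw[OF du] has_derivative_linear by blast
    have "?w1 - ?w2 = h *\<^sub>R (0, 1)" by simp
    then have DA: "frechet_derivative (pd False f) (at p) (?w1 - ?w2) = h * ?A"
      using linear_scale[OF lin, of h "(0,1)"] by (simp add: pd_dir dir_def)
    have "\<bar>pd False f ?w1 - pd False f ?w2 - h * ?A\<bar> \<le> e * (norm (?w1 - p) + norm (?w2 - p))"
      using d1(2)[of ?w1 ?w2] n1 n2 h DA by simp
    also have "\<dots> \<le> e * (3 * h)" using n1 n2 e by (intro mult_left_mono) auto
    finally have b: "\<bar>pd False f ?w1 - pd False f ?w2 - h * ?A\<bar> \<le> 3 * e * h" by simp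
    have "\<Delta> = h * (pd False f ?w1 - pd False f ?w2)" using th(3) by (simp add: \<Delta>_def)
    then have "\<Delta> - h * h * ?A = h * (pd False f ?w1 - pd False f ?w2 - h * ?A)"
      by (simp add: algebra_simps)
    then have "\<bar>\<Delta> - h * h * ?A\<bar> = h * \<bar>pd False f ?w1 - pd False f ?w2 - h * ?A\<bar>"
      using h(1) by (simp add: abs_mult)
    also have "\<dots> \<le> h * (3 * e * h)" using b h(1) by (intro mult_left_mono) auto
    finally show ?thesis by (simp add: mult_ac)
  qed
  obtain \<eta> where et: "0 < \<eta>" "\<eta> < h"
    "(\<lambda>s. f (a + h, b + s) - f (a, b + s)) h - (\<lambda>s. f (a + h, b + s) - f (a, b + s)) 0
       = (h - 0) * (pd True f (a + h, b + \<eta>) - pd True f (a, b + \<eta>))"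
  proof -
    have "\<exists>z. 0 < z \<and> z < h \<and> (\<lambda>s. f (a + h, b + s) - f (a, b + s)) h - (\<lambda>s. f (a + h, b + s) - f (a, b + s)) 0
       = (h - 0) * (\<lambda>z. pd True f (a + h, b + z) - pd True f (a, b + z)) z"
    proof (rule MVT2[OF h(1)])
      fix s assume s: "0 \<le> s" "s \<le> h"
      have "f differentiable at (a + h, b + s)" "f differentiable at (a + 0, b + s)"
        using df[OF inU[of h s]] df[OF inU[of 0 s]] s h by auto
      then show "((\<lambda>s. f (a + h, b + s) - f (a, b + s)) has_real_derivative
          pd True f (a + h, b + s) - pd True f (a, b + s)) (at s)"
        using DERIV_diff[OF deriv_line_v deriv_line_v] by simp
    qed
    then show ?thesis using that by auto
  qed
  have E2: "\<bar>\<Delta> - h * h * ?B\<bar> \<le> 3 * e * h * h"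
  proof -
    let ?w1 = "(a + h, b + \<eta>)" and ?w2 = "(a, b + \<eta>)"
    have n1: "norm (?w1 - p) \<le> 2 * h" using nrm[of h \<eta>] et h by simp
    have n2: "norm (?w2 - p) \<le> h" using nrm[of 0 \<eta>] et h by simp
    have lin: "linear (frechet_derivative (pd True f) (at p))"
      using fdw[OF dv] has_derivative_linear by blast
    have "?w1 - ?w2 = h *\<^sub>R (1, 0)" by simp
    then have DA: "frechet_derivative (pd True f) (at p) (?w1 - ?w2) = h * ?B"
      using linear_scale[OF lin, of h "(1,0)"] by (simp add: pd_dir dir_def)
    have "\<bar>pd True f ?w1 - pd True f ?w2 - h * ?B\<bar> \<le> e * (norm (?w1 - p) + norm (?w2 - p))"
      using d2(2)[of ?w1 ?w2] n1 n2 h DA by simp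
    also have "\<dots> \<le> e * (3 * h)" using n1 n2 e by (intro mult_left_mono) auto
    finally have b: "\<bar>pd True f ?w1 - pd True f ?w2 - h * ?B\<bar> \<le> 3 * e * h" by simp
    have "\<Delta> = h * (pd True f ?w1 - pd True f ?w2)" using et(3) by (simp add: \<Delta>_def)
    then have "\<Delta> - h * h * ?B = h * (pd True f ?w1 - pd True f ?w2 - h * ?B)"
      by (simp add: algebra_simps)
    then have "\<bar>\<Delta> - h * h * ?B\<bar> = h * \<bar>pd True f ?w1 - pd True f ?w2 - h * ?B\<bar>"
      using h(1) by (simp add: abs_mult)
    also have "\<dots> \<le> h * (3 * e * h)" using b h(1) by (intro mult_left_mono) auto
    finally show ?thesis by (simp add: mult_ac)
  qed
  have "h * h * \<bar>?A - ?B\<bar> \<le> 6 * e * h * h"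
  proof -
    have "h * h * \<bar>?A - ?B\<bar> = \<bar>(\<Delta> - h * h * ?B) - (\<Delta> - h * h * ?A)\<bar>"
      using h(1) by (simp add: abs_mult right_diff_distrib[symmetric] abs_minus_commute)
    also have "\<dots> \<le> \<bar>\<Delta> - h * h * ?B\<bar> + \<bar>\<Delta> - h * h * ?A\<bar>" by (rule abs_triangle_ineq4)
    finally show ?thesis using E1 E2 by simp
  qed
  then have "\<bar>?A - ?B\<bar> \<le> 6 * e" using h(1) by (simp add: mult_ac)
  then show False using e by (simp add: e_def)
qed




lemma ipd_snoc: "ipd js (pd j F) = ipd (js @ [j]) F"
  by (induction js) auto

lemma smooth_pd: "smooth_on U F \<Longrightarrow> smooth_on U (pd j F)"
  unfolding smooth_on_def by (metis ipd_snoc)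

lemma smooth_diff: "smooth_on U F \<Longrightarrow> open U \<Longrightarrow> p \<in> U \<Longrightarrow> F differentiable at p"
  unfolding smooth_on_def using differentiable_on_eq_differentiable_at
  by (metis ipd.simps(1))

lemma diff_nth: "G differentiable at p \<Longrightarrow> (\<lambda>q. G q $ k) differentiable at p"
  using differentiableI[OF bounded_linear.has_derivative[OF bounded_linear_vec_nth fdw]] by blast

lemma diff_local:
  assumes "g differentiable at p" "open U" "p \<in> U" "\<And>q. q \<in> U \<Longrightarrow> g q = f q"
  shows "f differentiable at p"
  using assms has_derivative_transform_within_open unfolding differentiable_def by blast

lemma schwarz_vec:
  fixes F :: "real \<times> real \<Rightarrow> real^'n"
  assumes "smooth_on U F" "open U" "p \<in> U"
  shows "pd True (pd False F) p = pd False (pd True F) p"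
proof -
  have dF: "\<And>q. q \<in> U \<Longrightarrow> F differentiable at q" using smooth_diff assms by blast
  have dFu: "\<And>q. q \<in> U \<Longrightarrow> pd False F differentiable at q" using smooth_diff smooth_pd assms by blast
  have dFv: "\<And>q. q \<in> U \<Longrightarrow> pd True F differentiable at q" using smooth_diff smooth_pd assms by blast
  show ?thesis
  proof (subst vec_eq_iff, intro allI)
    fix k
    let ?f = "\<lambda>q. F q $ k"
    have eu: "\<And>q. q \<in> U \<Longrightarrow> pd False F q $ k = pd False ?f q" using pd_nth dF by metis
    have ev: "\<And>q. q \<in> U \<Longrightarrow> pd True F q $ k = pd True ?f q" using pd_nth dF by metis
    have du: "pd False ?f differentiable at p"
      by (rule diff_local[OF diff_nth[OF dFu[OF assms(3)]] assms(2,3)]) (use eu in auto)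
    have dv: "pd True ?f differentiable at p"
      by (rule diff_local[OF diff_nth[OF dFv[OF assms(3)]] assms(2,3)]) (use ev in auto)
    have "pd True (pd False F) p $ k = pd True (\<lambda>q. pd False F q $ k) p"
      using pd_nth[OF dFu[OF assms(3)]] by simp
    also have "\<dots> = pd True (pd False ?f) p"
      by (rule pd_local[OF diff_nth[OF dFu[OF assms(3)]] assms(2,3)]) (use eu in auto)
    also have "\<dots> = pd False (pd True ?f) p"
      by (rule schwarz_real[OF assms(2,3) _ du dv]) (simp add: diff_nth dF)
    also have "\<dots> = pd False (\<lambda>q. pd True F q $ k) p"
      by (rule pd_local[OF dv assms(2,3)]) (use ev in auto)
    also have "\<dots> = pd False (pd True F) p $ k"
      using pd_nth[OF dFv[OF assms(3)]] by simp
    finally show "pd True (pd False F) p $ k = pd False (pd True F) p $ k" .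
  qed
qed

lemma schwarz_gen:
  fixes F :: "real \<times> real \<Rightarrow> real^'n"
  assumes "smooth_on U F" "open U" "p \<in> U"
  shows "pd i (pd j F) p = pd j (pd i F) p"
  using schwarz_vec[OF assms] by (cases i; cases j) auto




lemma gmet_fun: "gmet x i j = (\<lambda>q. pd i x q \<bullet> pd j x q)"
  by (rule ext) (simp add: gmet_def)
lemma gdet_fun: "gdet x = (\<lambda>q. gmet x False False q * gmet x True True q - gmet x False True q * gmet x True False q)"
  by (rule ext) (simp add: gdet_def)
lemma ginv_fun: "ginv x i j = (\<lambda>q. (if i = j then gmet x (\<not> i) (\<not> j) q else - gmet x i j q) / gdet x q)"
  by (rule ext) (simp add: ginv_def)

locale patch =
  fixes U :: "(real \<times> real) set" and x N :: "real \<times> real \<Rightarrow> real^3"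
  assumes imm: "immersed_patch_with_gauss_map U x N"
begin

lemma oU: "open U" and smx: "smooth_on U x" and smN: "smooth_on U N"
  using imm by (auto simp: immersed_patch_with_gauss_map_def)

lemma perp: "q \<in> U \<Longrightarrow> N q \<bullet> pd i x q = 0"
  using imm by (cases i) (auto simp: immersed_patch_with_gauss_map_def)

lemma unit: "q \<in> U \<Longrightarrow> N q \<bullet> N q = 1"
  using imm by (auto simp: immersed_patch_with_gauss_map_def norm_eq_1)

lemma nondeg: "q \<in> U \<Longrightarrow> cross3 (pd False x q) (pd True x q) \<noteq> 0"
  using imm by (auto simp: immersed_patch_with_gauss_map_def)

lemma dx: "q \<in> U \<Longrightarrow> x differentiable at q"
  using smooth_diff[OF smx oU] .
lemma dX: "q \<in> U \<Longrightarrow> pd i x differentiable at q"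
  using smooth_diff[OF smooth_pd[OF smx] oU] .
lemma dX2: "q \<in> U \<Longrightarrow> pd i (pd j x) differentiable at q"
  using smooth_diff[OF smooth_pd[OF smooth_pd[OF smx]] oU] .
lemma dX3: "q \<in> U \<Longrightarrow> pd i (pd j (pd k x)) differentiable at q"
  using smooth_diff[OF smooth_pd[OF smooth_pd[OF smooth_pd[OF smx]]] oU] .
lemma dN: "q \<in> U \<Longrightarrow> N differentiable at q"
  using smooth_diff[OF smN oU] .
lemma dN1: "q \<in> U \<Longrightarrow> pd i N differentiable at q"
  using smooth_diff[OF smooth_pd[OF smN] oU] .
lemma dN2: "q \<in> U \<Longrightarrow> pd i (pd j N) differentiable at q"
  using smooth_diff[OF smooth_pd[OF smooth_pd[OF smN]] oU] .

lemma dg: "q \<in> U \<Longrightarrow> gmet x i j differentiable at q"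
  unfolding gmet_fun by (simp add: dX)
lemma ddet: "q \<in> U \<Longrightarrow> gdet x differentiable at q"
  unfolding gdet_fun by (simp add: dg)

lemma gdet_pos: "q \<in> U \<Longrightarrow> gdet x q > 0"
proof -
  assume q: "q \<in> U"
  let ?a = "pd False x q" and ?b = "pd True x q"
  have "gdet x q = (norm ?a * norm ?b)^2 - (?a \<bullet> ?b)^2"
    by (simp add: gdet_def gmet_def power_mult_distrib power2_norm_eq_inner inner_commute power2_eq_square[symmetric])
  also have "\<dots> = (norm (cross3 ?a ?b))^2" using norm_cross_dot[of ?a ?b] by simp
  finally show ?thesis using nondeg[OF q] by simp
qed

lemma dginv: "q \<in> U \<Longrightarrow> ginv x i j differentiable at q"
  unfolding ginv_fun using gdet_pos[of q] by (cases "i = j") (auto intro!: differentiable_divide simp: dg ddet)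

lemma dsq: "q \<in> U \<Longrightarrow> (\<lambda>q. sqrt (gdet x q)) differentiable at q"
  using DERIV_compose_FDERIV[OF DERIV_real_sqrt[OF gdet_pos] fdw[OF ddet]] unfolding differentiable_def by blast

end



lemma ortho_zero:
  fixes a b n w :: "real^3"
  assumes c: "cross3 a b \<noteq> 0" and na: "n \<bullet> a = 0" and nb: "n \<bullet> b = 0" and nn: "n \<bullet> n = 1"
    and wa: "w \<bullet> a = 0" and wb: "w \<bullet> b = 0" and wn: "w \<bullet> n = 0"
  shows "w = 0"
proof -
  let ?c = "cross3 a b"
  have C0: "cross3 ?c z = 0" if "z \<bullet> a = 0" "z \<bullet> b = 0" for z
  proof -
    have "cross3 ?c z = - cross3 z ?c" by (rule cross_skew)
    also have "\<dots> = - ((z \<bullet> b) *\<^sub>R a - (z \<bullet> a) *\<^sub>R b)" by (simp add: Lagrange)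
    finally show ?thesis using that by simp
  qed
  have Lw: "(?c \<bullet> ?c) *\<^sub>R w = (?c \<bullet> w) *\<^sub>R ?c"
  proof -
    have "cross3 ?c w = 0" using wa wb by (rule C0)
    then show ?thesis using Lagrange[of ?c ?c w] by simp
  qed
  have Ln: "(?c \<bullet> ?c) *\<^sub>R n = (?c \<bullet> n) *\<^sub>R ?c"
  proof -
    have "cross3 ?c n = 0" using na nb by (rule C0)
    then show ?thesis using Lagrange[of ?c ?c n] by simp
  qed
  have cc: "?c \<bullet> ?c > 0" using c by simp
  have "(?c \<bullet> ?c) * (n \<bullet> n) = (?c \<bullet> n) * (?c \<bullet> n)"
    using arg_cong[OF Ln, of "\<lambda>z. z \<bullet> n"] by (simp add: inner_commute)
  then have cn: "?c \<bullet> n \<noteq> 0" using cc nn by auto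
  have "(?c \<bullet> ?c) * (w \<bullet> n) = (?c \<bullet> w) * (?c \<bullet> n)"
    using arg_cong[OF Lw, of "\<lambda>z. z \<bullet> n"] by (simp add: inner_commute)
  then have "?c \<bullet> w = 0" using wn cn by simp
  then have "(?c \<bullet> ?c) *\<^sub>R w = 0" using Lw by simp
  then show ?thesis using cc by simp
qed

context patch begin

lemma R1: "p \<in> U \<Longrightarrow> pd j N p \<bullet> pd i x p + N p \<bullet> pd j (pd i x) p = 0"
proof -
  assume p: "p \<in> U"
  have "pd j (\<lambda>q. N q \<bullet> pd i x q) p = 0" by (rule pd_zero_local[OF oU p]) (simp add: perp)
  then show ?thesis by (simp add: pd_inner dN dX p)
qed

lemma R0: "p \<in> U \<Longrightarrow> pd j N p \<bullet> N p = 0"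
proof -
  assume p: "p \<in> U"
  have "pd j (\<lambda>q. N q \<bullet> N q) p = 0" by (rule pd_zero_local[OF oU p]) (simp add: unit)
  then show ?thesis by (simp add: pd_inner dN p inner_commute)
qed

lemma R2: "p \<in> U \<Longrightarrow> pd k (pd j N) p \<bullet> pd i x p + pd j N p \<bullet> pd k (pd i x) p
   + (pd k N p \<bullet> pd j (pd i x) p + N p \<bullet> pd k (pd j (pd i x)) p) = 0"
proof -
  assume p: "p \<in> U"
  have "pd k (\<lambda>q. pd j N q \<bullet> pd i x q + N q \<bullet> pd j (pd i x) q) p = 0"
    by (rule pd_zero_local[OF oU p]) (simp add: R1)
  then show ?thesis by (simp add: pd_inner pd_add dN dX dN1 dX2 p)
qed

lemma R0': "p \<in> U \<Longrightarrow> pd k (pd j N) p \<bullet> N p + pd j N p \<bullet> pd k N p = 0"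
proof -
  assume p: "p \<in> U"
  have "pd k (\<lambda>q. pd j N q \<bullet> N q) p = 0"
    by (rule pd_zero_local[OF oU p]) (simp add: R0)
  then show ?thesis by (simp add: pd_inner dN dN1 p)
qed

lemma sym2: "p \<in> U \<Longrightarrow> pd i (pd j x) p = pd j (pd i x) p"
  using schwarz_gen[OF smx oU] .

lemma sym3a: "p \<in> U \<Longrightarrow> pd k (pd i (pd j x)) p = pd k (pd j (pd i x)) p"
  by (rule pd_local[OF dX2 oU]) (auto simp: sym2)

lemma sym3b: "p \<in> U \<Longrightarrow> pd k (pd i (pd j x)) p = pd i (pd k (pd j x)) p"
  using schwarz_gen[OF smooth_pd[OF smx] oU] .

lemma gmet_sym: "gmet x i j p = gmet x j i p"
  by (simp add: gmet_def inner_commute)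

lemma ginv_inv:
  assumes p: "p \<in> U"
  shows "(\<Sum>l\<in>UNIV. ginv x k l p * gmet x l m p) = (if k = m then 1 else 0)"
proof -
  have D: "gdet x p \<noteq> 0" using gdet_pos[OF p] by simp
  have G: "gdet x p = gmet x False False p * gmet x True True p - gmet x False True p * gmet x False True p"
    using gmet_sym[of True False p] by (simp add: gdet_def)
  show ?thesis using D gmet_sym[of True False p]
    by (cases k; cases m; simp add: UNIV_bool ginv_def D field_simps; simp add: G)
qed

lemma decomp:
  assumes p: "p \<in> U"
  shows "v = (v \<bullet> N p) *\<^sub>R N p + (\<Sum>k\<in>UNIV. \<Sum>l\<in>UNIV. (ginv x k l p * (v \<bullet> pd k x p)) *\<^sub>R pd l x p)"
proof -
  let ?w = "v - ((v \<bullet> N p) *\<^sub>R N p + (\<Sum>k\<in>UNIV. \<Sum>l\<in>UNIV. (ginv x k l p * (v \<bullet> pd k x p)) *\<^sub>R pd l x p))"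
  have pf: "pd i x p \<bullet> N p = 0" for i using perp[OF p] by (simp add: inner_commute)
  have wm: "?w \<bullet> pd m x p = 0" for m
  proof -
    have "?w \<bullet> pd m x p = v \<bullet> pd m x p - (\<Sum>k\<in>UNIV. (v \<bullet> pd k x p) * (\<Sum>l\<in>UNIV. ginv x k l p * gmet x l m p))"
      by (simp add: inner_diff_left inner_add_left inner_sum_left pf perp[OF p] sum_distrib_left gmet_def mult_ac)
    also have "\<dots> = 0" unfolding ginv_inv[OF p] by (cases m) (simp_all add: UNIV_bool)
    finally show ?thesis .
  qed
  have "?w = 0"
  proof (rule ortho_zero[OF nondeg[OF p]])
    show "N p \<bullet> pd False x p = 0" "N p \<bullet> pd True x p = 0" using perp[OF p] by auto
    show "N p \<bullet> N p = 1" using unit[OF p] .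
    show "?w \<bullet> N p = 0"
      using perp[OF p] unit[OF p] by (simp add: UNIV_bool inner_diff_left inner_add_left pf)
    show "?w \<bullet> pd False x p = 0" "?w \<bullet> pd True x p = 0" using wm by auto
  qed
  then show ?thesis by simp
qed

end



definition Cc :: "(real \<times> real \<Rightarrow> real^3) \<Rightarrow> bool \<Rightarrow> real \<times> real \<Rightarrow> real" where
  "Cc x j p = (\<Sum>i\<in>UNIV. pd i (\<lambda>q. sqrt (gdet x q)) p / sqrt (gdet x p) * ginv x i j p + pd i (ginv x i j) p)"

lemma alg_lapl:
  fixes s :: real and A :: "bool \<Rightarrow> real" and g dg f2 :: "bool \<Rightarrow> bool \<Rightarrow> real" and f1 :: "bool \<Rightarrow> real"
  assumes "s \<noteq> 0"
  shows "1 / s * (\<Sum>i\<in>UNIV. A i * (\<Sum>j\<in>UNIV. g i j * f1 j) + s * (\<Sum>j\<in>UNIV. dg i j * f1 j + g i j * f2 i j))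
    = (\<Sum>i\<in>UNIV. \<Sum>j\<in>UNIV. g i j * f2 i j) + (\<Sum>j\<in>UNIV. (\<Sum>i\<in>UNIV. A i / s * g i j + dg i j) * f1 j)"
  using assms by (simp add: UNIV_bool field_simps)

context patch begin

lemma lapl_gen:
  assumes p: "p \<in> U" and df: "\<And>j. pd j f differentiable at p"
  shows "lapl x f p = (\<Sum>i\<in>UNIV. \<Sum>j\<in>UNIV. ginv x i j p * pd i (pd j f) p) + (\<Sum>j\<in>UNIV. Cc x j p * pd j f p)"
proof -
  have s: "sqrt (gdet x p) > 0" using gdet_pos[OF p] by simp
  have inner: "pd i (\<lambda>q. sqrt (gdet x q) * (\<Sum>j\<in>UNIV. ginv x i j q * pd j f q)) p
     = pd i (\<lambda>q. sqrt (gdet x q)) p * (\<Sum>j\<in>UNIV. ginv x i j p * pd j f p)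
       + sqrt (gdet x p) * (\<Sum>j\<in>UNIV. pd i (ginv x i j) p * pd j f p + ginv x i j p * pd i (pd j f) p)" for i
  proof -
    have d1: "(\<lambda>q. \<Sum>j\<in>UNIV. ginv x i j q * pd j f q) differentiable at p"
      by (simp add: dginv[OF p] df)
    have "pd i (\<lambda>q. sqrt (gdet x q) * (\<Sum>j\<in>UNIV. ginv x i j q * pd j f q)) p
      = pd i (\<lambda>q. sqrt (gdet x q)) p * (\<Sum>j\<in>UNIV. ginv x i j p * pd j f p)
       + sqrt (gdet x p) * pd i (\<lambda>q. \<Sum>j\<in>UNIV. ginv x i j q * pd j f q) p"
      by (rule pd_mult[OF dsq[OF p] d1])
    also have "pd i (\<lambda>q. \<Sum>j\<in>UNIV. ginv x i j q * pd j f q) p = (\<Sum>j\<in>UNIV. pd i (\<lambda>q. ginv x i j q * pd j f q) p)"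
      by (rule pd_sum) (simp_all add: dginv[OF p] df)
    also have "\<dots> = (\<Sum>j\<in>UNIV. pd i (ginv x i j) p * pd j f p + ginv x i j p * pd i (pd j f) p)"
      by (rule sum.cong[OF refl], rule pd_mult[OF dginv[OF p] df])
    finally show ?thesis .
  qed
  show ?thesis
    unfolding lapl_def inner Cc_def using alg_lapl[of "sqrt (gdet x p)"] s by simp
qed

lemma lapl_vec_gen:
  assumes p: "p \<in> U" and dF: "\<And>q. q \<in> U \<Longrightarrow> F differentiable at q" and dF1: "\<And>j. pd j F differentiable at p"
  shows "lapl_vec x F p = (\<Sum>i\<in>UNIV. \<Sum>j\<in>UNIV. ginv x i j p *\<^sub>R pd i (pd j F) p) + (\<Sum>j\<in>UNIV. Cc x j p *\<^sub>R pd j F p)"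
proof (subst vec_eq_iff, intro allI)
  fix k
  let ?f = "\<lambda>q. F q $ k"
  have e: "\<And>q. q \<in> U \<Longrightarrow> pd j F q $ k = pd j ?f q" for j using pd_nth dF by metis
  have d: "pd j ?f differentiable at p" for j
    by (rule diff_local[OF diff_nth[OF dF1] oU p]) (use e in auto)
  have e2: "pd i (pd j ?f) p = pd i (pd j F) p $ k" for i j
  proof -
    have "pd i (pd j ?f) p = pd i (\<lambda>q. pd j F q $ k) p"
      by (rule pd_local[OF d oU p]) (use e in auto)
    also have "\<dots> = pd i (pd j F) p $ k" by (rule pd_nth[OF dF1])
    finally show ?thesis .
  qed
  have "lapl_vec x F p $ k = lapl x ?f p" by (simp add: lapl_vec_def)
  also have "\<dots> = (\<Sum>i\<in>UNIV. \<Sum>j\<in>UNIV. ginv x i j p * pd i (pd j ?f) p) + (\<Sum>j\<in>UNIV. Cc x j p * pd j ?f p)"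
    by (rule lapl_gen[OF p d])
  also have "\<dots> = ((\<Sum>i\<in>UNIV. \<Sum>j\<in>UNIV. ginv x i j p *\<^sub>R pd i (pd j F) p) + (\<Sum>j\<in>UNIV. Cc x j p *\<^sub>R pd j F p)) $ k"
    using e[OF p] by (simp add: e2)
  finally show "lapl_vec x F p $ k = ((\<Sum>i\<in>UNIV. \<Sum>j\<in>UNIV. ginv x i j p *\<^sub>R pd i (pd j F) p) + (\<Sum>j\<in>UNIV. Cc x j p *\<^sub>R pd j F p)) $ k" .
qed

lemma pd_gmet: "p \<in> U \<Longrightarrow> pd k (gmet x a b) p = pd k (pd a x) p \<bullet> pd b x p + pd a x p \<bullet> pd k (pd b x) p"
  unfolding gmet_fun by (rule pd_inner[OF dX dX])

lemma pd_gdet: "p \<in> U \<Longrightarrow> pd k (gdet x) p =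
   pd k (gmet x False False) p * gmet x True True p + gmet x False False p * pd k (gmet x True True) p
   - (pd k (gmet x False True) p * gmet x True False p + gmet x False True p * pd k (gmet x True False) p)"
  unfolding gdet_fun by (simp add: pd_diff pd_mult dg)

lemma pd_ginv: "p \<in> U \<Longrightarrow> pd k (ginv x i j) p =
   ((if i = j then pd k (gmet x (\<not> i) (\<not> j)) p else - pd k (gmet x i j) p) * gdet x p
    - (if i = j then gmet x (\<not> i) (\<not> j) p else - gmet x i j p) * pd k (gdet x) p) / (gdet x p)^2"
proof -
  assume p: "p \<in> U"
  have n: "gdet x p \<noteq> 0" using gdet_pos[OF p] by simp
  have m: "pd k (\<lambda>q. - gmet x i j q) p = - pd k (gmet x i j) p"
  proof -
    have "pd k (\<lambda>q. 0 - gmet x i j q) p = pd k (\<lambda>q. 0) p - pd k (gmet x i j) p"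
      by (rule pd_diff) (simp_all add: dg[OF p])
    then show ?thesis by (simp add: pd_const)
  qed
  show ?thesis
  proof (cases "i = j")
    case True
    then show ?thesis unfolding ginv_fun by (simp add: pd_divide dg[OF p] ddet[OF p] n)
  next
    case False
    have eq: "ginv x i j = (\<lambda>q. (\<lambda>q. - gmet x i j q) q / gdet x q)"
      by (rule ext) (simp add: ginv_def False)
    have dn: "(\<lambda>q. - gmet x i j q) differentiable at p" by (simp add: dg[OF p])
    show ?thesis unfolding eq pd_divide[OF dn ddet[OF p] n] m using False by simp
  qed
qed

lemma Cc_expl: "p \<in> U \<Longrightarrow> Cc x j p = (\<Sum>i\<in>UNIV. pd i (gdet x) p / (2 * gdet x p) * ginv x i j p + pd i (ginv x i j) p)"
proof -
  assume p: "p \<in> U"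
  have s: "sqrt (gdet x p) * sqrt (gdet x p) = gdet x p" using gdet_pos[OF p] by simp
  have "pd i (\<lambda>q. sqrt (gdet x q)) p / sqrt (gdet x p) = pd i (gdet x) p / (2 * gdet x p)" for i
  proof -
    have "pd i (\<lambda>q. sqrt (gdet x q)) p / sqrt (gdet x p) = pd i (gdet x) p / (2 * (sqrt (gdet x p) * sqrt (gdet x p)))"
      using pd_sqrt[OF ddet[OF p] gdet_pos[OF p]] by simp
    then show ?thesis using s by simp
  qed
  then show ?thesis by (simp add: Cc_def)
qed

end



definition adj :: "(real \<times> real \<Rightarrow> real^3) \<Rightarrow> bool \<Rightarrow> bool \<Rightarrow> real \<times> real \<Rightarrow> real" where
  "adj x i j p = (if i = j then gmet x (\<not> i) (\<not> j) p else - gmet x i j p)"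

definition dadj :: "(real \<times> real \<Rightarrow> real^3) \<Rightarrow> bool \<Rightarrow> bool \<Rightarrow> bool \<Rightarrow> real \<times> real \<Rightarrow> real" where
  "dadj x k i j p = (if i = j then pd k (gmet x (\<not> i) (\<not> j)) p else - pd k (gmet x i j) p)"

definition Gam :: "(real \<times> real \<Rightarrow> real^3) \<Rightarrow> bool \<Rightarrow> bool \<Rightarrow> bool \<Rightarrow> real \<times> real \<Rightarrow> real" where
  "Gam x k l m p = pd k (pd l x) p \<bullet> pd m x p"

context patch begin

lemma gdet_eq: "gdet x p = gmet x False False p * gmet x True True p - gmet x False True p * gmet x False True p"
  using gmet_sym[of True False p] by (simp add: gdet_def)

lemma ginv_adj: "ginv x i j p = adj x i j p / gdet x p"
  by (simp add: ginv_def adj_def)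

lemma Cc_step1:
  assumes p: "p \<in> U"
  shows "2 * (gdet x p)^2 * Cc x j p = (\<Sum>i\<in>UNIV. 2 * gdet x p * dadj x i i j p - adj x i j p * pd i (gdet x) p)"
proof -
  have n: "gdet x p \<noteq> 0" using gdet_pos[OF p] by simp
  have "2 * (gdet x p)^2 * (pd i (gdet x) p / (2 * gdet x p) * ginv x i j p + pd i (ginv x i j) p)
        = 2 * gdet x p * dadj x i i j p - adj x i j p * pd i (gdet x) p" for i
    unfolding pd_ginv[OF p] ginv_adj using n
    by (simp add: adj_def dadj_def field_simps power2_eq_square)
  then show ?thesis unfolding Cc_expl[OF p] by (simp add: sum_distrib_left)
qed

lemma X2X: "pd a x p \<bullet> pd k (pd b x) p = pd k (pd b x) p \<bullet> pd a x p"
  by (rule inner_commute)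

lemma Cc_step2:
  assumes p: "p \<in> U"
  shows "(\<Sum>i\<in>UNIV. 2 * gdet x p * dadj x i i j p - adj x i j p * pd i (gdet x) p)
     = - 2 * (\<Sum>k\<in>UNIV. \<Sum>l\<in>UNIV. \<Sum>m\<in>UNIV. adj x k l p * adj x j m p * Gam x k l m p)"
proof -
  have s2: "pd True (pd False x) p = pd False (pd True x) p" using sym2[OF p] .
  have gs: "gmet x True False p = gmet x False True p" by (rule gmet_sym)
  show ?thesis
    unfolding pd_gdet[OF p] dadj_def adj_def Gam_def gdet_eq
    by (cases j) (simp_all add: UNIV_bool pd_gmet[OF p] s2 X2X gs algebra_simps)
qed

lemma Cc_val:
  assumes p: "p \<in> U"
  shows "Cc x j p = - (\<Sum>k\<in>UNIV. \<Sum>l\<in>UNIV. \<Sum>m\<in>UNIV. ginv x k l p * ginv x j m p * Gam x k l m p)"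
proof -
  have n: "gdet x p \<noteq> 0" using gdet_pos[OF p] by simp
  have "2 * (gdet x p)^2 * Cc x j p = 2 * (gdet x p)^2 * (- (\<Sum>k\<in>UNIV. \<Sum>l\<in>UNIV. \<Sum>m\<in>UNIV. ginv x k l p * ginv x j m p * Gam x k l m p))"
    unfolding Cc_step1[OF p] Cc_step2[OF p] ginv_adj using n
    by (simp add: UNIV_bool field_simps power2_eq_square)
  moreover have "2 * (gdet x p)^2 \<noteq> 0" using n by simp
  ultimately show ?thesis by (rule mult_left_cancel[THEN iffD1, rotated])
qed

lemma ginv_sym: "ginv x i j p = ginv x j i p"
  by (simp add: ginv_def gmet_sym)

lemma XX: "pd a x p \<bullet> pd b x p = gmet x a b p"
  by (simp add: gmet_def)

lemma tan:
  assumes p: "p \<in> U"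
  shows "(\<Sum>i\<in>UNIV. \<Sum>j\<in>UNIV. ginv x i j p * (pd i (pd j x) p \<bullet> pd m x p)) + (\<Sum>j\<in>UNIV. Cc x j p * (pd j x p \<bullet> pd m x p)) = 0"
proof -
  have a: "(\<Sum>j\<in>UNIV. Cc x j p * (pd j x p \<bullet> pd m x p)) =
    - (\<Sum>k\<in>UNIV. \<Sum>l\<in>UNIV. \<Sum>m'\<in>UNIV. ginv x k l p * Gam x k l m' p * (\<Sum>j\<in>UNIV. ginv x m' j p * gmet x j m p))"
    unfolding Cc_val[OF p] by (simp add: UNIV_bool XX ginv_sym[of True False] algebra_simps)
  also have "\<dots> = - (\<Sum>k\<in>UNIV. \<Sum>l\<in>UNIV. ginv x k l p * Gam x k l m p)"
    unfolding ginv_inv[OF p] by (cases m) (simp_all add: UNIV_bool)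
  finally show ?thesis by (simp add: Gam_def)
qed

definition H2 :: "(real \<times> real) \<Rightarrow> real" where
  "H2 q = (\<Sum>i\<in>UNIV. \<Sum>j\<in>UNIV. ginv x i j q * sff x N i j q)"

lemma lapl_x:
  assumes p: "p \<in> U"
  shows "lapl_vec x x p = (\<Sum>i\<in>UNIV. \<Sum>j\<in>UNIV. ginv x i j p *\<^sub>R pd i (pd j x) p) + (\<Sum>j\<in>UNIV. Cc x j p *\<^sub>R pd j x p)"
  by (rule lapl_vec_gen[OF p dx dX[OF p]])

lemma lapl_x_normal:
  assumes p: "p \<in> U"
  shows "lapl_vec x x p = H2 p *\<^sub>R N p"
proof -
  let ?V = "lapl_vec x x p"
  have pf: "pd i x p \<bullet> N p = 0" for i using perp[OF p] by (simp add: inner_commute)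
  have t: "?V \<bullet> pd k x p = 0" for k
    using tan[OF p, of k] unfolding lapl_x[OF p]
    by (simp add: inner_add_left inner_sum_left)
  have nn: "?V \<bullet> N p = H2 p"
    unfolding lapl_x[OF p] H2_def sff_def by (simp add: inner_add_left inner_sum_left pf)
  show ?thesis using decomp[OF p, of ?V] by (simp add: t nn)
qed

lemma mc: "q \<in> U \<Longrightarrow> 2 * mean_curv x N q = H2 q"
  unfolding mean_curv_def using lapl_x_normal[of q] unit[of q] by simp

end



context patch begin

lemma sff_fun: "sff x N i j = (\<lambda>q. pd i (pd j x) q \<bullet> N q)"
  by (rule ext) (simp add: sff_def)

lemma sff_sym: "p \<in> U \<Longrightarrow> sff x N i j p = sff x N j i p"
  by (simp add: sff_def sym2)

lemma wein:
  assumes p: "p \<in> U"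
  shows "pd i N p = (\<Sum>k\<in>UNIV. \<Sum>l\<in>UNIV. (- ginv x k l p * sff x N i k p) *\<^sub>R pd l x p)"
proof -
  have a: "pd i N p \<bullet> pd k x p = - sff x N i k p" for k
    using R1[OF p, of i k] by (simp add: sff_def inner_commute)
  show ?thesis using decomp[OF p, of "pd i N p"] by (simp add: R0[OF p] a)
qed

lemma pd_ginv_alt:
  assumes p: "p \<in> U"
  shows "pd m (ginv x i j) p = - (\<Sum>a\<in>UNIV. \<Sum>b\<in>UNIV. ginv x i a p * pd m (gmet x a b) p * ginv x b j p)"
proof -
  have n: "gdet x p \<noteq> 0" using gdet_pos[OF p] by simp
  have gs: "gmet x True False p = gmet x False True p" by (rule gmet_sym)
  have ps: "pd m (gmet x True False) p = pd m (gmet x False True) p"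
    unfolding pd_gmet[OF p] by (simp add: inner_commute)
  have "(gdet x p)^2 * pd m (ginv x i j) p = (gdet x p)^2 * (- (\<Sum>a\<in>UNIV. \<Sum>b\<in>UNIV. ginv x i a p * pd m (gmet x a b) p * ginv x b j p))"
    unfolding pd_ginv[OF p] ginv_adj using n
    apply (simp add: UNIV_bool field_simps power2_eq_square pd_gdet[OF p] adj_def gs ps)
    apply (cases i; cases j; simp add: gdet_eq algebra_simps)
    done
  moreover have "(gdet x p)^2 \<noteq> 0" using n by simp
  ultimately show ?thesis by (rule mult_left_cancel[THEN iffD1, rotated])
qed

lemma lapl_N:
  assumes p: "p \<in> U"
  shows "lapl_vec x N p = (\<Sum>i\<in>UNIV. \<Sum>j\<in>UNIV. ginv x i j p *\<^sub>R pd i (pd j N) p) + (\<Sum>j\<in>UNIV. Cc x j p *\<^sub>R pd j N p)"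
  by (rule lapl_vec_gen[OF p dN dN1[OF p]])

lemma NN:
  assumes p: "p \<in> U"
  shows "pd j N p \<bullet> pd i N p = (\<Sum>k\<in>UNIV. \<Sum>k'\<in>UNIV. sff x N j k p * sff x N i k' p * ginv x k k' p)"
proof -
  have gs: "gmet x True False p = gmet x False True p" by (rule gmet_sym)
  have "pd j N p \<bullet> pd i N p = (\<Sum>k\<in>UNIV. \<Sum>k'\<in>UNIV. sff x N j k p * sff x N i k' p *
          (\<Sum>l\<in>UNIV. ginv x k l p * (\<Sum>l'\<in>UNIV. ginv x k' l' p * gmet x l' l p)))"
    unfolding wein[OF p]
    by (simp add: UNIV_bool inner_add_left inner_add_right XX gs algebra_simps)
  also have "\<dots> = (\<Sum>k\<in>UNIV. \<Sum>k'\<in>UNIV. sff x N j k p * sff x N i k' p * ginv x k k' p)"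
    unfolding ginv_inv[OF p] by (simp add: UNIV_bool)
  finally show ?thesis .
qed

lemma norm_part:
  assumes p: "p \<in> U"
  shows "lapl_vec x N p \<bullet> N p = - sff_norm2 x N p"
proof -
  have a: "pd i (pd j N) p \<bullet> N p = - (pd j N p \<bullet> pd i N p)" for i j
    using R0'[OF p, of i j] by simp
  have hs: "sff x N True False p = sff x N False True p" using sff_sym[OF p] .
  have gis: "ginv x True False p = ginv x False True p" by (rule ginv_sym)
  have "lapl_vec x N p \<bullet> N p = - (\<Sum>i\<in>UNIV. \<Sum>j\<in>UNIV. ginv x i j p * (pd j N p \<bullet> pd i N p))"
    unfolding lapl_N[OF p] by (simp add: inner_add_left inner_sum_left a R0[OF p] sum_negf)
  also have "\<dots> = - sff_norm2 x N p"
    unfolding NN[OF p] sff_norm2_def by (simp add: UNIV_bool hs gis algebra_simps)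
  finally show ?thesis .
qed

lemma dsff: "q \<in> U \<Longrightarrow> sff x N i j differentiable at q"
  unfolding sff_fun by (simp add: dX2 dN)

lemma pd_sff: "p \<in> U \<Longrightarrow> pd m (sff x N i j) p = pd m (pd i (pd j x)) p \<bullet> N p + pd i (pd j x) p \<bullet> pd m N p"
  unfolding sff_fun by (rule pd_inner[OF dX2 dN])

lemma H2_fun: "H2 = (\<lambda>q. \<Sum>i\<in>UNIV. \<Sum>j\<in>UNIV. ginv x i j q * sff x N i j q)"
  by (rule ext) (simp add: H2_def)

lemma pd_H2:
  assumes p: "p \<in> U"
  shows "pd m H2 p = (\<Sum>i\<in>UNIV. \<Sum>j\<in>UNIV. pd m (ginv x i j) p * sff x N i j p + ginv x i j p * pd m (sff x N i j) p)"
proof -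
  have "pd m H2 p = (\<Sum>i\<in>UNIV. pd m (\<lambda>q. \<Sum>j\<in>UNIV. ginv x i j q * sff x N i j q) p)"
    unfolding H2_fun by (rule pd_sum) (simp_all add: dginv[OF p] dsff[OF p])
  also have "\<dots> = (\<Sum>i\<in>UNIV. \<Sum>j\<in>UNIV. pd m (\<lambda>q. ginv x i j q * sff x N i j q) p)"
    by (rule sum.cong[OF refl], rule pd_sum) (simp_all add: dginv[OF p] dsff[OF p])
  also have "\<dots> = (\<Sum>i\<in>UNIV. \<Sum>j\<in>UNIV. pd m (ginv x i j) p * sff x N i j p + ginv x i j p * pd m (sff x N i j) p)"
    by (intro sum.cong refl pd_mult dginv[OF p] dsff[OF p])
  finally show ?thesis .
qed

lemma x3s: "p \<in> U \<Longrightarrow> pd m (pd i (pd j x)) p = pd i (pd j (pd m x)) p"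
  using sym3a sym3b by metis

lemma GamF: "pd k (pd l x) p \<bullet> pd m x p = Gam x k l m p"
  by (simp add: Gam_def)

lemma cod:
  assumes p: "p \<in> U"
  shows "lapl_vec x N p \<bullet> pd m x p = - pd m H2 p"
proof -
  have r2: "pd i (pd j N) p \<bullet> pd m x p = - (pd j N p \<bullet> pd i (pd m x) p) - (pd i N p \<bullet> pd j (pd m x) p)
      - N p \<bullet> pd i (pd j (pd m x)) p" for i j
    using R2[OF p, of i j m] by simp
  have r1: "pd j N p \<bullet> pd m x p = - sff x N j m p" for j
    using R1[OF p, of j m] by (simp add: sff_def inner_commute)
  have hs: "sff x N True False p = sff x N False True p" using sff_sym[OF p] .
  have gis: "ginv x True False p = ginv x False True p" by (rule ginv_sym)
  have s2: "pd True (pd False x) p = pd False (pd True x) p" using sym2[OF p] .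
  have gs: "gmet x True False p = gmet x False True p" by (rule gmet_sym)
  have Gs: "Gam x True False k p = Gam x False True k p" for k by (simp add: Gam_def s2)
  have t3: "pd i (pd j (pd m x)) p \<bullet> N p = N p \<bullet> pd i (pd j (pd m x)) p" for i j by (rule inner_commute)
  have "lapl_vec x N p \<bullet> pd m x p = (\<Sum>i\<in>UNIV. \<Sum>j\<in>UNIV. ginv x i j p *
      (- (pd j N p \<bullet> pd i (pd m x) p) - (pd i N p \<bullet> pd j (pd m x) p) - N p \<bullet> pd i (pd j (pd m x)) p))
     + (\<Sum>j\<in>UNIV. Cc x j p * (- sff x N j m p))"
    unfolding lapl_N[OF p] by (simp add: inner_add_left inner_sum_left r2 r1)
  also have "\<dots> = - pd m H2 p"
    unfolding pd_H2[OF p] pd_ginv_alt[OF p] pd_sff[OF p] x3s[OF p] Cc_val[OF p] wein[OF p] pd_gmet[OF p]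
    apply (simp add: UNIV_bool inner_add_left inner_add_right X2X GamF s2 hs gis t3)
    apply (cases m; simp add: X2X GamF s2 hs gis Gs algebra_simps)
    done
  finally show ?thesis .
qed

end



lemma diff_cross: "f differentiable at p \<Longrightarrow> g differentiable at p \<Longrightarrow> (\<lambda>q. cross3 (f q) (g q)) differentiable at p"
  using differentiableI[OF bounded_bilinear.FDERIV[OF bb_cross fdw fdw]] by blast

context patch begin

lemma dH2: "p \<in> U \<Longrightarrow> H2 differentiable at p"
  unfolding H2_fun by (simp add: dginv dsff)

lemma pd_xE: "p \<in> U \<Longrightarrow> pd k (\<lambda>q. x q \<bullet> c) p = pd k x p \<bullet> c"
proof -
  assume p: "p \<in> U"
  have "pd k (\<lambda>q. x q \<bullet> c) p = pd k x p \<bullet> c + x p \<bullet> pd k (\<lambda>q. c) p"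
    by (rule pd_inner[OF dx[OF p] differentiable_const])
  then show ?thesis by (simp add: pd_const)
qed

lemma pdH2_hyp:
  assumes hyp: "\<forall>p\<in>U. 2 * mean_curv x N p = a * ((x p \<bullet> E 1)\<^sup>2 + (x p \<bullet> E 2)\<^sup>2) + b"
    and p: "p \<in> U"
  shows "pd k H2 p = 2 * a * ((x p \<bullet> E 1) * (pd k x p \<bullet> E 1) + (x p \<bullet> E 2) * (pd k x p \<bullet> E 2))"
proof -
  let ?f = "\<lambda>i q. x q \<bullet> E i"
  have df: "?f i differentiable at p" for i by (simp add: dx[OF p])
  have "pd k H2 p = pd k (\<lambda>q. a * (?f 1 q * ?f 1 q + ?f 2 q * ?f 2 q) + b) p"
    by (rule pd_local[OF dH2[OF p] oU p]) (use hyp mc in \<open>auto simp: power2_eq_square\<close>)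
  also have "\<dots> = a * (pd k (\<lambda>q. ?f 1 q * ?f 1 q) p + pd k (\<lambda>q. ?f 2 q * ?f 2 q) p)"
    using df by (simp add: pd_add pd_cmult pd_const)
  also have "\<dots> = 2 * a * ((x p \<bullet> E 1) * (pd k x p \<bullet> E 1) + (x p \<bullet> E 2) * (pd k x p \<bullet> E 2))"
    using df by (simp add: pd_mult pd_xE[OF p] algebra_simps)
  finally show ?thesis .
qed

lemma LN_formula:
  assumes hyp: "\<forall>p\<in>U. 2 * mean_curv x N p = a * ((x p \<bullet> E 1)\<^sup>2 + (x p \<bullet> E 2)\<^sup>2) + b"
    and p: "p \<in> U"
  defines "P \<equiv> (x p \<bullet> E 1) *\<^sub>R E 1 + (x p \<bullet> E 2) *\<^sub>R E 2"
  shows "lapl_vec x N p = (- sff_norm2 x N p) *\<^sub>R N p - (2 * a) *\<^sub>R (P - (P \<bullet> N p) *\<^sub>R N p)"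
proof -
  let ?S = "(\<Sum>k\<in>UNIV. \<Sum>l\<in>UNIV. (ginv x k l p * (P \<bullet> pd k x p)) *\<^sub>R pd l x p)"
  have S: "?S = P - (P \<bullet> N p) *\<^sub>R N p" using decomp[OF p, of P] by (simp add: algebra_simps)
  have PX: "P \<bullet> pd k x p = (x p \<bullet> E 1) * (pd k x p \<bullet> E 1) + (x p \<bullet> E 2) * (pd k x p \<bullet> E 2)" for k
    by (simp add: P_def E_def inner_add_left inner_add_right inner_axis inner_axis' mult.commute)
  have LX: "lapl_vec x N p \<bullet> pd k x p = - (2 * a) * (P \<bullet> pd k x p)" for k
    using cod[OF p, of k] pdH2_hyp[OF hyp p, of k] PX by simp
  have "lapl_vec x N p = (- sff_norm2 x N p) *\<^sub>R N p + (\<Sum>k\<in>UNIV. \<Sum>l\<in>UNIV. (ginv x k l p * (- (2 * a) * (P \<bullet> pd k x p))) *\<^sub>R pd l x p)"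
    using decomp[OF p, of "lapl_vec x N p"] by (simp add: norm_part[OF p] LX)
  also have "(\<Sum>k\<in>UNIV. \<Sum>l\<in>UNIV. (ginv x k l p * (- (2 * a) * (P \<bullet> pd k x p))) *\<^sub>R pd l x p) = (- (2 * a)) *\<^sub>R ?S"
    by (simp add: scaleR_sum_right mult_ac)
  finally show ?thesis unfolding S by simp
qed

lemma final_N3:
  assumes hyp: "\<forall>p\<in>U. 2 * mean_curv x N p = a * ((x p \<bullet> E 1)\<^sup>2 + (x p \<bullet> E 2)\<^sup>2) + b"
    and p: "p \<in> U"
  shows "lapl x (\<lambda>q. N q \<bullet> E 3) p + (sff_norm2 x N p - 2 * a * (support x N p - (x p \<bullet> E 3) * (N p \<bullet> E 3))) * (N p \<bullet> E 3) = 0"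
proof -
  have fe: "(\<lambda>q. N q \<bullet> E 3) = (\<lambda>q. N q $ 3)" by (simp add: E_def inner_axis)
  have "lapl x (\<lambda>q. N q \<bullet> E 3) p = lapl_vec x N p $ 3" unfolding fe by (simp add: lapl_vec_def)
  then show ?thesis unfolding LN_formula[OF hyp p]
    by (simp add: E_def inner_axis inner_axis' support_def inner_vec_def sum_3 axis_def algebra_simps)
qed

lemma lapl_F3:
  assumes p: "p \<in> U"
  shows "lapl_vec x (\<lambda>q. cross3 (x q) (N q)) p $ 3 = cross3 (x p) (lapl_vec x N p) $ 3"
proof -
  let ?F = "\<lambda>q. cross3 (x q) (N q)"
  let ?G = "\<lambda>j q. cross3 (pd j x q) (N q) + cross3 (x q) (pd j N q)"
  have dF: "\<And>q. q \<in> U \<Longrightarrow> ?F differentiable at q" by (rule diff_cross[OF dx dN])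
  have pF: "\<And>q. q \<in> U \<Longrightarrow> pd j ?F q = ?G j q" for j by (rule pd_cross[OF dx dN])
  have dG: "?G j differentiable at p" for j
    by (intro differentiable_add diff_cross dX[OF p] dN[OF p] dx[OF p] dN1[OF p])
  have dF1: "pd j ?F differentiable at p" for j
    by (rule diff_local[OF dG oU p]) (simp add: pF)
  have p2: "pd i (pd j ?F) p = cross3 (pd i (pd j x) p) (N p) + cross3 (pd j x p) (pd i N p)
      + (cross3 (pd i x p) (pd j N p) + cross3 (x p) (pd i (pd j N) p))" for i j
  proof -
    have "pd i (pd j ?F) p = pd i (?G j) p"
      by (rule pd_local[OF dF1 oU p]) (simp add: pF)
    also have "\<dots> = pd i (\<lambda>q. cross3 (pd j x q) (N q)) p + pd i (\<lambda>q. cross3 (x q) (pd j N q)) p"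
      by (rule pd_add) (intro diff_cross dX[OF p] dN[OF p] dx[OF p] dN1[OF p])+
    also have "\<dots> = cross3 (pd i (pd j x) p) (N p) + cross3 (pd j x p) (pd i N p)
      + (cross3 (pd i x p) (pd j N p) + cross3 (x p) (pd i (pd j N) p))"
      by (simp add: pd_cross dX[OF p] dN[OF p] dx[OF p] dN1[OF p])
    finally show ?thesis .
  qed
  let ?M = "\<Sum>i\<in>UNIV. \<Sum>j\<in>UNIV. ginv x i j p *\<^sub>R (cross3 (pd j x p) (pd i N p) + cross3 (pd i x p) (pd j N p))"
  have L0: "lapl_vec x ?F p = (\<Sum>i\<in>UNIV. \<Sum>j\<in>UNIV. ginv x i j p *\<^sub>R pd i (pd j ?F) p) + (\<Sum>j\<in>UNIV. Cc x j p *\<^sub>R pd j ?F p)"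
    by (rule lapl_vec_gen[OF p dF dF1])
  have L: "lapl_vec x ?F p = cross3 (lapl_vec x x p) (N p) + cross3 (x p) (lapl_vec x N p) + ?M"
    unfolding L0 p2 pF[OF p] lapl_x[OF p] lapl_N[OF p]
    by (simp add: UNIV_bool cross_add_left cross_add_right cross_mult_left cross_mult_right algebra_simps)
  have c0: "cross3 (lapl_vec x x p) (N p) = 0" unfolding lapl_x_normal[OF p] by (simp add: cross_mult_left)
  have hs: "sff x N True False p = sff x N False True p" using sff_sym[OF p] .
  have gis: "ginv x True False p = ginv x False True p" by (rule ginv_sym)
  have sk: "cross3 (pd True x p) (pd False x p) = - cross3 (pd False x p) (pd True x p)" by (rule cross_skew)
  have M0: "?M $ 3 = 0"
    unfolding wein[OF p]
    by (simp add: UNIV_bool cross_add_left cross_add_right cross_mult_left cross_mult_right Cross3.right_diff_distrib Cross3.left_diff_distrib sk hs gis algebra_simps)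
  show ?thesis unfolding L using M0 c0 by simp
qed

lemma final_psi:
  assumes hyp: "\<forall>p\<in>U. 2 * mean_curv x N p = a * ((x p \<bullet> E 1)\<^sup>2 + (x p \<bullet> E 2)\<^sup>2) + b"
    and p: "p \<in> U"
  shows "lapl x (\<lambda>q. cross3 (x q) (N q) \<bullet> E 3) p + (sff_norm2 x N p - 2 * a * (support x N p - (x p \<bullet> E 3) * (N p \<bullet> E 3))) * (cross3 (x p) (N p) \<bullet> E 3) = 0"
proof -
  have fe: "(\<lambda>q. cross3 (x q) (N q) \<bullet> E 3) = (\<lambda>q. cross3 (x q) (N q) $ 3)" by (simp add: E_def inner_axis)
  have "lapl x (\<lambda>q. cross3 (x q) (N q) \<bullet> E 3) p = lapl_vec x (\<lambda>q. cross3 (x q) (N q)) p $ 3"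
    unfolding fe by (simp add: lapl_vec_def)
  then show ?thesis unfolding lapl_F3[OF p] LN_formula[OF hyp p]
    by (simp add: E_def inner_axis inner_axis' support_def inner_vec_def sum_3 axis_def cross_components algebra_simps)
qed

end


theorem mainTheorem3:
  fixes U :: "(real \<times> real) set" and x N :: "real \<times> real \<Rightarrow> real^3" and a b :: real
  assumes "immersed_patch_with_gauss_map U x N"
    and "\<forall>p\<in>U. 2 * mean_curv x N p = a * ((x p \<bullet> E 1)\<^sup>2 + (x p \<bullet> E 2)\<^sup>2) + b"
  shows "\<forall>u \<in> {(\<lambda>q. N q \<bullet> E 3), (\<lambda>q. cross3 (x q) (N q) \<bullet> E 3)}. \<forall>p\<in>U.
           lapl x u p + (sff_norm2 x N p - 2 * a * (support x N p - (x p \<bullet> E 3) * (N p \<bullet> E 3))) * u p = 0"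
proof -
  interpret patch U x N using assms(1) by (simp add: patch_def)
  show ?thesis using final_N3[OF assms(2)] final_psi[OF assms(2)] by auto
qed

end
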